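(* Let $n\ge2$, $\mathbf i\in\Sigma_n$, $0\le s\le n(n-1)/2$ and $\bullet\in\{D,A\}$. Then there is a canonical injective map $\Psi_\bullet(\mathbf i,s):\mathcal{GP}(\mathbf i)\hookrightarrow\mathcal{GP}(E_\bullet(s)(\mathbf i))$ whose image is exactly the set of rigorous paths $P$ of $G(E_\bullet(s)(\mathbf i))$ such that $P$ does not switch wires at any node lying on $\ell_\bullet$, where $\ell_D:=\ell_{n+1}$ and $\ell_A:=\ell_1$ (wires of $G(E_\bullet(s)(\mathbf i))$). In particular $|\mathcal{GP}(E_\bullet(s)(\mathbf i))|$ equals $|\mathcal{GP}(\mathbf i)|$ plus the number of rigorous paths of $E_\bullet(s)(\mathbf i)$ that switch wires at some node of $\ell_\bullet$.
   Context: $\Sigma_{m+1}$: reduced words of the longest element of $\mathfrak S_{m+1}$ in $s_i=(i,i+1)$, of length $m(m+1)/2$. Extensions: for $\mathbf i=(i_1,\dots,i_M)\in\Sigma_n$ ($M=n(n-1)/2$) and $0\le s\le M$, let $\mathbf i^-(s)=(i_1,\dots,i_{M-s})$, $\mathbf i^+(s)=(i_{M-s+1},\dots,i_M)$; for a word $\mathbf w$, $\mathbf w+1$ adds $1$ to every letter. $E_D(s)(\mathbf i):=\mathbf i^-(s)\,(n,n-1,\dots,1)\,(\mathbf i^+(s)+1)\in\Sigma_{n+1}$ and $E_A(s)(\mathbf i):=(\mathbf i^-(s)+1)\,(1,2,\dots,n)\,\mathbf i^+(s)\in\Sigma_{n+1}$ (concatenations). Wiring diagram $G(\mathbf j)$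 for $\mathbf j\in\Sigma_{m+1}$: $m+1$ wires $\ell_1,\dots,\ell_{m+1}$ run top to bottom through positions $1,\dots,m+1$; at the top $\ell_k$ is in position $k$; the $j$-th node swaps the wires in positions $j_j, j_j+1$; at the bottom $\ell_k$ is in position $m+2-k$ and ends at $L_k$. Rigorous paths: for $k\in[m]$, $G(\mathbf j,k)$ has $\ell_1,\dots,\ell_k$ oriented upward and the rest downward. A rigorous path in $G(\mathbf j,k)$ starts at $L_k$, ends at $L_{k+1}$, moves along wires in their orientation, switches wires only at their crossing node, passes each node at most once, and never passes straight through $\ell_a\cap\ell_b$ while on $\ell_a$ when both are downward with $a>b$ or both upward with $a<b$. $\mathcal{GP}(\mathbf j)$ = set of all rigorous paths (all $k$). *)

theory Defs
  imports Main "HOL-Combinatorics.Transposition"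
begin

(* Product s_{i_1} ... s_{i_M} of simple transpositions s_i = (i, i+1), as a map on nat.
   Equivalently: word_perm (take t ws) p = the wire sitting in position p after the
   first t nodes of the wiring diagram. *)
definition word_perm :: "nat list \<Rightarrow> nat \<Rightarrow> nat" where
  "word_perm ws = foldl (\<lambda>f i. f \<circ> transpose i (Suc i)) id ws"

definition longest :: "nat \<Rightarrow> nat \<Rightarrow> nat" where
  "longest N p = (if 1 \<le> p \<and> p \<le> N then Suc N - p else p)"

(* Sigma N: reduced words of the longest element of S_N (N wires) *)
definition Sigma :: "nat \<Rightarrow> nat list set" where
  "Sigma N = {ws. length ws = N * (N - 1) div 2 \<and> set ws \<subseteq> {1..<N}
                 \<and> word_perm ws = longest N}"

(* Nodes of G(j) are indexed 0..<length j from top to bottom; node t swaps positions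
   j!t, j!t+1. The two wires crossing at node t: *)
definition wires_at :: "nat list \<Rightarrow> nat \<Rightarrow> nat set" where
  "wires_at j t = {word_perm (take t j) (j ! t), word_perm (take t j) (Suc (j ! t))}"

definition other_wire :: "nat list \<Rightarrow> nat \<Rightarrow> nat \<Rightarrow> nat" where
  "other_wire j t a = (if a = word_perm (take t j) (j ! t)
                        then word_perm (take t j) (Suc (j ! t))
                        else word_perm (take t j) (j ! t))"

(* In G(j,k) wire l_a is oriented upward iff a \<le> k. Next node reached when travelling along
   wire a in its orientation, coming from node prev (None = from the end point of the wire). *)
definition next_node :: "nat list \<Rightarrow> nat \<Rightarrow> nat \<Rightarrow> nat option \<Rightarrow> nat option" where
  "next_node j k a prev =
     (if a \<le> k then
        (let C = {t. t < length j \<and> a \<in> wires_at j t \<and>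
                     (case prev of None \<Rightarrow> True | Some p \<Rightarrow> t < p)}
         in if C = {} then None else Some (Max C))
      else
        (let C = {t. t < length j \<and> a \<in> wires_at j t \<and>
                     (case prev of None \<Rightarrow> True | Some p \<Rightarrow> p < t)}
         in if C = {} then None else Some (Min C)))"

definition forbidden_pass :: "nat list \<Rightarrow> nat \<Rightarrow> nat \<Rightarrow> nat \<Rightarrow> bool" where
  "forbidden_pass j k t a = (let b = other_wire j t a in
      (\<not> a \<le> k \<and> \<not> b \<le> k \<and> b < a) \<or> (a \<le> k \<and> b \<le> k \<and> a < b))"

(* A path is recorded as its start index k together with the list of nodes it traverses,
   each node t_i paired with the wire w_i on which it leaves t_i (w_0 = k). *)
type_synonym path = "nat \<times> (nat \<times> nat) list"

definition path_wires :: "path \<Rightarrow> nat list" where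
  "path_wires P = fst P # map snd (snd P)"

definition rigorous :: "nat list \<Rightarrow> nat \<Rightarrow> (nat \<times> nat) list \<Rightarrow> bool" where
  "rigorous j k ps =
    (let ws = k # map snd ps; ts = None # map (Some \<circ> fst) ps in
      (\<forall>i < length ps.
          next_node j k (ws ! i) (ts ! i) = Some (fst (ps ! i))
        \<and> snd (ps ! i) \<in> wires_at j (fst (ps ! i))
        \<and> (snd (ps ! i) = ws ! i \<longrightarrow> \<not> forbidden_pass j k (fst (ps ! i)) (ws ! i)))
      \<and> distinct (map fst ps)
      \<and> last ws = Suc k
      \<and> next_node j k (last ws) (last ts) = None)"

definition GP :: "nat \<Rightarrow> nat list \<Rightarrow> path set" where
  "GP N j = {(k, ps). 1 \<le> k \<and> k < N \<and> rigorous j k ps}"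

definition switches_at :: "path \<Rightarrow> nat \<Rightarrow> bool" where
  "switches_at P t = (\<exists>i < length (snd P). fst (snd P ! i) = t \<and>
                         snd (snd P ! i) \<noteq> path_wires P ! i)"

definition no_switch_on_wire :: "nat list \<Rightarrow> nat \<Rightarrow> path \<Rightarrow> bool" where
  "no_switch_on_wire j a P = (\<forall>t < length j. a \<in> wires_at j t \<longrightarrow> \<not> switches_at P t)"

datatype ext_kind = ExtD | ExtA

definition ext :: "ext_kind \<Rightarrow> nat \<Rightarrow> nat \<Rightarrow> nat list \<Rightarrow> nat list" where
  "ext b n s ws = (let M = n * (n - 1) div 2 in
     case b of
       ExtD \<Rightarrow> take (M - s) ws @ rev [1..<Suc n] @ map Suc (drop (M - s) ws)
     | ExtA \<Rightarrow> map Suc (take (M - s) ws) @ [1..<Suc n] @ drop (M - s) ws)"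

definition ext_wire :: "ext_kind \<Rightarrow> nat \<Rightarrow> nat" where
  "ext_wire b n = (case b of ExtD \<Rightarrow> Suc n | ExtA \<Rightarrow> 1)"

(* Restriction of a path of G(E_b(s)(i)) back to G(i): forget the nodes on l_b and
   relabel nodes and wires (used to pin down the canonical map). *)
definition restrict_path :: "ext_kind \<Rightarrow> nat \<Rightarrow> nat \<Rightarrow> nat list \<Rightarrow> path \<Rightarrow> path" where
  "restrict_path b n s j' P = (let M = n * (n - 1) div 2;
      node = (\<lambda>t. if t < M - s then t else t - n);
      wire = (\<lambda>w. case b of ExtD \<Rightarrow> w | ExtA \<Rightarrow> w - 1) in
    (wire (fst P),
     map (\<lambda>(t, w). (node t, wire w))
         (filter (\<lambda>(t, w). ext_wire b n \<notin> wires_at j' t) (snd P))))"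

end

theory Submission
  imports Defs
begin

lemma foldl_comp_gen: "foldl (\<lambda>f i. f \<circ> transpose i (Suc i)) (g :: nat \<Rightarrow> nat) ws = g \<circ> foldl (\<lambda>f i. f \<circ> transpose i (Suc i)) id ws"
proof (induction ws arbitrary: g)
  case Nil then show ?case by simp
next
  case (Cons x ws)
  have a: "foldl (\<lambda>f i. f \<circ> transpose i (Suc i)) g (x # ws) = (g \<circ> transpose x (Suc x)) \<circ> foldl (\<lambda>f i. f \<circ> transpose i (Suc i)) id ws"
    unfolding foldl_Cons by (rule Cons.IH)
  have b: "foldl (\<lambda>f i. f \<circ> transpose i (Suc i)) id (x # ws) = transpose x (Suc x) \<circ> foldl (\<lambda>f i. f \<circ> transpose i (Suc i)) id ws"
    unfolding foldl_Cons id_comp by (rule Cons.IH[where g = "Transposition.transpose x (Suc x)"])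
  show ?case unfolding a b by (simp only: comp_assoc)
qed

lemma word_perm_Nil[simp]: "word_perm [] = id" by (simp add: word_perm_def)
lemma word_perm_Cons: "word_perm (x # xs) = transpose x (Suc x) \<circ> word_perm xs"
  unfolding word_perm_def by (simp add: foldl_comp_gen[where g="transpose x (Suc x)"])
lemma word_perm_append: "word_perm (xs @ ys) = word_perm xs \<circ> word_perm ys"
  unfolding word_perm_def by (simp add: foldl_comp_gen[where g="foldl _ id xs"])

definition sh :: "(nat \<Rightarrow> nat) \<Rightarrow> nat \<Rightarrow> nat" where
  "sh f q = (if q = 0 then 0 else Suc (f (q - 1)))"

lemma transpose_Suc_Suc: "Transposition.transpose (Suc a) (Suc b) (Suc y) = Suc (Transposition.transpose a b y)"
  by (simp add: transpose_def)
lemma transpose_Suc_0: "Transposition.transpose (Suc a) (Suc b) 0 = 0"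
  by (simp add: transpose_def)

lemma word_perm_map_Suc: "word_perm (map Suc ys) = sh (word_perm ys)"
proof (induction ys)
  case Nil then show ?case by (auto simp: sh_def fun_eq_iff)
next
  case (Cons x ys)
  show ?case
  proof
    fix q
    have "word_perm (map Suc (x # ys)) q = Transposition.transpose (Suc x) (Suc (Suc x)) (sh (word_perm ys) q)"
      by (simp add: word_perm_Cons Cons)
    also have "\<dots> = sh (word_perm (x # ys)) q"
      by (cases q) (simp_all add: sh_def transpose_Suc_Suc transpose_Suc_0 word_perm_Cons)
    finally show "word_perm (map Suc (x # ys)) q = sh (word_perm (x # ys)) q" .
  qed
qed

lemma transpose_range: "1 \<le> x \<Longrightarrow> x < n \<Longrightarrow> 1 \<le> y \<Longrightarrow> y \<le> n \<Longrightarrow>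
   1 \<le> Transposition.transpose x (Suc x) y \<and> Transposition.transpose x (Suc x) y \<le> n"
  by (simp add: transpose_def)

lemma word_perm_range: "set xs \<subseteq> {1..<n} \<Longrightarrow> 1 \<le> q \<Longrightarrow> q \<le> n \<Longrightarrow> 1 \<le> word_perm xs q \<and> word_perm xs q \<le> n"
proof (induction xs)
  case (Cons x xs)
  then have "1 \<le> word_perm xs q \<and> word_perm xs q \<le> n" "1 \<le> x" "x < n" by auto
  then show ?case unfolding word_perm_Cons comp_def using transpose_range by blast
qed simp

lemma word_perm_fix: "set xs \<subseteq> {1..<n} \<Longrightarrow> (q = 0 \<or> q > n) \<Longrightarrow> word_perm xs q = q"
proof (induction xs)
  case (Cons x xs)
  then have "word_perm xs q = q" "1 \<le> x" "x < n" by auto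
  then show ?case unfolding word_perm_Cons comp_def using Cons.prems(2)
    by (auto simp: transpose_def)
qed simp

lemma word_perm_inj: "inj (word_perm xs)"
proof (induction xs)
  case (Cons x xs) then show ?case unfolding word_perm_Cons by (rule inj_compose[OF inj_transpose])
qed simp

lemma word_perm_desc: "m \<le> Suc n \<Longrightarrow> word_perm (rev [m..<Suc n]) q =
   (if q = m then Suc n else if m < q \<and> q \<le> Suc n then q - 1 else q)"
proof (induction "Suc n - m" arbitrary: m q)
  case 0 then show ?case by auto
next
  case (Suc d)
  then have "m \<le> n" by arith
  then have e: "[m..<Suc n] = m # [Suc m..<Suc n]" by (simp add: upt_rec)
  have ih: "\<And>q. word_perm (rev [Suc m..<Suc n]) q =
   (if q = Suc m then Suc n else if Suc m < q \<and> q \<le> Suc n then q - 1 else q)"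
    by (rule Suc.hyps(1)) (use Suc.hyps(2) \<open>m \<le> n\<close> in arith)+
  have w: "word_perm (rev [m..<Suc n]) q = word_perm (rev [Suc m..<Suc n]) (Transposition.transpose m (Suc m) q)"
    unfolding e by (simp del: upt_Suc add: word_perm_append word_perm_Cons)
  show ?case
  proof (cases "q = m")
    case True then show ?thesis using w ih by (simp del: upt_Suc)
  next
    case False
    show ?thesis
    proof (cases "q = Suc m")
      case True then show ?thesis using w ih \<open>m \<le> n\<close> by (simp del: upt_Suc)
    next
      case False
      then show ?thesis using w ih \<open>q \<noteq> m\<close> by (simp del: upt_Suc add: transpose_apply_other)
    qed
  qed
qed

lemma word_perm_asc: "word_perm [1..<Suc r] q =
   (if q = Suc r then 1 else if 1 \<le> q \<and> q \<le> r then Suc q else q)"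
proof (induction r arbitrary: q)
  case 0 then show ?case by auto
next
  case (Suc r)
  have e: "[1..<Suc (Suc r)] = [1..<Suc r] @ [Suc r]" by simp
  have w: "word_perm [1..<Suc (Suc r)] q = word_perm [1..<Suc r] (Transposition.transpose (Suc r) (Suc (Suc r)) q)"
    unfolding e by (simp del: upt_Suc add: word_perm_append word_perm_Cons)
  consider "q = Suc r" | "q = Suc (Suc r)" | "q \<noteq> Suc r" "q \<noteq> Suc (Suc r)" by blast
  then show ?case
  proof cases
    case 1 then show ?thesis using w Suc.IH[of "Suc (Suc r)"] by (simp del: upt_Suc)
  next
    case 2 then show ?thesis using w Suc.IH[of "Suc r"] by (simp del: upt_Suc)
  next
    case 3 then show ?thesis using w Suc.IH[of q] by (simp del: upt_Suc add: transpose_apply_other)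
  qed
qed


fun walk :: "nat list \<Rightarrow> nat \<Rightarrow> nat \<Rightarrow> nat option \<Rightarrow> (nat \<times> nat) list \<Rightarrow> bool" where
  "walk j k a prev [] = (a = Suc k \<and> next_node j k a prev = None)"
| "walk j k a prev ((t, w) # ps) = (next_node j k a prev = Some t \<and> w \<in> wires_at j t
      \<and> (w = a \<longrightarrow> \<not> forbidden_pass j k t a) \<and> walk j k w (Some t) ps)"

lemma rig_aux:
  "((\<forall>i < length ps.
          next_node j k ((a # map snd ps) ! i) ((prev # map (Some \<circ> fst) ps) ! i) = Some (fst (ps ! i))
        \<and> snd (ps ! i) \<in> wires_at j (fst (ps ! i))
        \<and> (snd (ps ! i) = (a # map snd ps) ! i \<longrightarrow> \<not> forbidden_pass j k (fst (ps ! i)) ((a # map snd ps) ! i)))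
      \<and> last (a # map snd ps) = Suc k
      \<and> next_node j k (last (a # map snd ps)) (last (prev # map (Some \<circ> fst) ps)) = None)
   = walk j k a prev ps"
proof (induction ps arbitrary: a prev)
  case Nil then show ?case by simp
next
  case (Cons x ps)
  obtain t w where x: "x = (t, w)" by (cases x)
  show ?case using Cons[of w "Some t"] unfolding x
    by (simp add: All_less_Suc2 del: last.simps) (auto simp: last_ConsR)
qed

lemma rigorous_walk: "rigorous j k ps = (walk j k k None ps \<and> distinct (map fst ps))"
  unfolding rigorous_def Let_def using rig_aux[of ps j k k None] by auto

definition before :: "bool \<Rightarrow> nat option \<Rightarrow> nat \<Rightarrow> bool" where
  "before up prev t = (case prev of None \<Rightarrow> True | Some p \<Rightarrow> (if up then t < p else p < t))"

definition cand :: "nat list \<Rightarrow> bool \<Rightarrow> nat \<Rightarrow> nat option \<Rightarrow> nat set" where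
  "cand j up a prev = {t. t < length j \<and> a \<in> wires_at j t \<and> before up prev t}"

lemma cand_finite[simp]: "finite (cand j up a prev)"
  by (rule finite_subset[of _ "{..<length j}"]) (auto simp: cand_def)

lemma cand_card_le: "card (cand j up a prev) \<le> length j"
  using card_mono[of "{..<length j}" "cand j up a prev"] by (auto simp: cand_def)

lemma next_node_cand: "next_node j k a prev =
  (if cand j (a \<le> k) a prev = {} then None
   else Some (if a \<le> k then Max (cand j (a \<le> k) a prev) else Min (cand j (a \<le> k) a prev)))"
  by (cases prev) (auto simp: next_node_def cand_def before_def Let_def)

lemma next_node_SomeD:
  assumes "next_node j k a prev = Some y"
  shows "y \<in> cand j (a \<le> k) a prev"
    "\<And>z. z \<in> cand j (a \<le> k) a prev \<Longrightarrow> (if a \<le> k then z \<le> y else y \<le> z)"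
proof -
  have ne: "cand j (a \<le> k) a prev \<noteq> {}" and y: "y = (if a \<le> k then Max (cand j (a \<le> k) a prev) else Min (cand j (a \<le> k) a prev))"
    using assms unfolding next_node_cand by (auto split: if_splits)
  show "y \<in> cand j (a \<le> k) a prev"
  proof (cases "a \<le> k")
    case True then show ?thesis using y Max_in[OF cand_finite ne] by simp
  next
    case False then show ?thesis using y Min_in[OF cand_finite ne] by simp
  qed
  fix z assume "z \<in> cand j (a \<le> k) a prev"
  then show "(if a \<le> k then z \<le> y else y \<le> z)"
    using y Max_ge[OF cand_finite, of z j "a \<le> k" a prev] Min_le[OF cand_finite, of z j "a \<le> k" a prev]
    by (cases "a \<le> k") simp_all
qed

lemma next_node_NoneD: "next_node j k a prev = None \<Longrightarrow> cand j (a \<le> k) a prev = {}"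
  unfolding next_node_cand by (auto split: if_splits)

lemma walk_set: "walk j k a prev ps \<Longrightarrow> (t, w) \<in> set ps \<Longrightarrow> t < length j \<and> w \<in> wires_at j t"
proof (induction ps arbitrary: a prev)
  case (Cons x ps)
  obtain t' w' where x: "x = (t', w')" by (cases x)
  show ?case using Cons unfolding x using next_node_SomeD(1)[of j k a prev t']
    by (auto simp: cand_def)
qed simp

fun nsw :: "nat list \<Rightarrow> nat \<Rightarrow> nat \<Rightarrow> (nat \<times> nat) list \<Rightarrow> bool" where
  "nsw j c a [] = True"
| "nsw j c a ((t, w) # ps) = ((c \<in> wires_at j t \<longrightarrow> w = a) \<and> nsw j c w ps)"

lemma nsw_idx: "nsw j c a ps = (\<forall>i < length ps. c \<in> wires_at j (fst (ps ! i)) \<longrightarrow> snd (ps ! i) = (a # map snd ps) ! i)"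
proof (induction ps arbitrary: a)
  case (Cons x ps)
  obtain t w where x: "x = (t, w)" by (cases x)
  show ?case using Cons unfolding x by (simp add: All_less_Suc2)
qed simp

lemma no_switch_nsw:
  assumes "\<And>t w. (t, w) \<in> set ps \<Longrightarrow> t < length j"
  shows "no_switch_on_wire j c (k, ps) = nsw j c k ps"
proof -
  have "no_switch_on_wire j c (k, ps) = (\<forall>i < length ps. c \<in> wires_at j (fst (ps ! i)) \<longrightarrow> snd (ps ! i) = (k # map snd ps) ! i)"
    unfolding no_switch_on_wire_def switches_at_def path_wires_def
  proof (auto, goal_cases)
    case (1 i)
    have "fst (ps ! i) < length j" using assms[of "fst (ps ! i)" "snd (ps ! i)"] 1 nth_mem by fastforce
    then show ?case using 1 by blast
  qed
  then show ?thesis by (simp add: nsw_idx)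
qed

lemma before_trans: "before up (Some y) z \<Longrightarrow> before up prev y \<Longrightarrow> before up prev z"
  by (cases prev) (auto simp: before_def split: if_splits)


locale sim =
  fixes I J :: "nat list" and emb node :: "nat \<Rightarrow> nat" and c N ww :: nat
  assumes emb_mono: "\<And>t1 t2. t1 < t2 \<Longrightarrow> t2 < length I \<Longrightarrow> emb t1 < emb t2"
  and emb_len: "\<And>t. t < length I \<Longrightarrow> emb t < length J"
  and node_emb: "\<And>t. t < length I \<Longrightarrow> node (emb t) = t"
  and old_iff: "\<And>y. y < length J \<Longrightarrow> (ww \<notin> wires_at J y) = (\<exists>t<length I. y = emb t)"
  and pos1: "\<And>t. t < length I \<Longrightarrow> word_perm (take (emb t) J) (J ! emb t) = word_perm (take t I) (I ! t) + c"
  and pos2: "\<And>t. t < length I \<Longrightarrow> word_perm (take (emb t) J) (Suc (J ! emb t)) = word_perm (take t I) (Suc (I ! t)) + c"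
  and wires_I: "\<And>t. t < length I \<Longrightarrow> wires_at I t \<subseteq> {1..N}"
  and ww_ne: "\<And>a. 1 \<le> a \<Longrightarrow> a \<le> N \<Longrightarrow> a + c \<noteq> ww"
  and newok: "\<And>u a k. u < length J \<Longrightarrow> ww \<in> wires_at J u \<Longrightarrow> a \<in> wires_at J u \<Longrightarrow> a \<noteq> ww
        \<Longrightarrow> 1 \<le> k \<Longrightarrow> k < N \<Longrightarrow> \<not> forbidden_pass J (k + c) u a"
begin

lemma emb_less_iff: "t1 < length I \<Longrightarrow> t2 < length I \<Longrightarrow> emb t1 < emb t2 \<longleftrightarrow> t1 < t2"
  by (metis emb_mono linorder_neqE_nat order_less_asym')

lemma emb_le_iff: "t1 < length I \<Longrightarrow> t2 < length I \<Longrightarrow> emb t1 \<le> emb t2 \<longleftrightarrow> t1 \<le> t2"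
  by (meson emb_less_iff not_le)

lemma emb_eq_iff: "t1 < length I \<Longrightarrow> t2 < length I \<Longrightarrow> emb t1 = emb t2 \<longleftrightarrow> t1 = t2"
  by (metis node_emb)

lemma wires_emb: "t < length I \<Longrightarrow> wires_at J (emb t) = (\<lambda>x. x + c) ` wires_at I t"
  unfolding wires_at_def using pos1 pos2 by simp

lemma other_emb: "t < length I \<Longrightarrow> a \<in> wires_at I t \<Longrightarrow> other_wire J (emb t) (a + c) = other_wire I t a + c"
  unfolding other_wire_def using pos1 pos2 by simp

lemma forb_emb: "t < length I \<Longrightarrow> a \<in> wires_at I t \<Longrightarrow>
   forbidden_pass J (k + c) (emb t) (a + c) = forbidden_pass I k t a"
  unfolding forbidden_pass_def Let_def using other_emb by simp

lemma emb_old: "t < length I \<Longrightarrow> ww \<notin> wires_at J (emb t)"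
  using old_iff[OF emb_len] by blast

definition corr :: "nat \<Rightarrow> nat \<Rightarrow> nat option \<Rightarrow> nat option \<Rightarrow> bool" where
  "corr k a pI pJ = (\<forall>t<length I. a \<in> wires_at I t \<longrightarrow> (before (a \<le> k) pJ (emb t) = before (a \<le> k) pI t))"

definition valid :: "nat \<Rightarrow> nat option \<Rightarrow> bool" where
  "valid a pI = (case pI of None \<Rightarrow> True | Some p \<Rightarrow> p < length I \<and> a \<in> wires_at I p)"

definition rl :: "(nat \<times> nat) list \<Rightarrow> (nat \<times> nat) list" where
  "rl ps = map (\<lambda>(t, w). (node t, w - c)) (filter (\<lambda>(t, w). ww \<notin> wires_at J t) ps)"

lemma rl_Nil[simp]: "rl [] = []" by (simp add: rl_def)
lemma rl_Cons: "rl ((y, w) # r) = (if ww \<in> wires_at J y then rl r else (node y, w - c) # rl r)"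
  by (simp add: rl_def)
lemma rl_mem: "(y, w) \<in> set r \<Longrightarrow> ww \<notin> wires_at J y \<Longrightarrow> (node y, w - c) \<in> set (rl r)"
  by (force simp: rl_def)

lemma nnJ: "next_node J (k + c) (a0 + c) pJ = next_node J (k + c) (a0 + c) pJ" ..

lemma candJ_eq: "cand J (a0 + c \<le> k + c) (a0 + c) pJ = cand J (a0 \<le> k) (a0 + c) pJ" by simp

lemma old_cand:
  assumes "corr k a0 pI pJ"
  shows "{y \<in> cand J (a0 \<le> k) (a0 + c) pJ. ww \<notin> wires_at J y} = emb ` cand I (a0 \<le> k) a0 pI"
proof
  show "{y \<in> cand J (a0 \<le> k) (a0 + c) pJ. ww \<notin> wires_at J y} \<subseteq> emb ` cand I (a0 \<le> k) a0 pI"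
  proof
    fix y assume y: "y \<in> {y \<in> cand J (a0 \<le> k) (a0 + c) pJ. ww \<notin> wires_at J y}"
    then have yl: "y < length J" and yw: "a0 + c \<in> wires_at J y" and yb: "before (a0 \<le> k) pJ y" and yo: "ww \<notin> wires_at J y"
      by (auto simp: cand_def)
    obtain t where t: "t < length I" "y = emb t" using old_iff[OF yl] yo by blast
    have "a0 \<in> wires_at I t" using yw wires_emb[OF t(1)] t(2) by auto
    moreover have "before (a0 \<le> k) pI t" using assms t yb \<open>a0 \<in> wires_at I t\<close> by (auto simp: corr_def)
    ultimately show "y \<in> emb ` cand I (a0 \<le> k) a0 pI" using t by (auto simp: cand_def)
  qed
next
  show "emb ` cand I (a0 \<le> k) a0 pI \<subseteq> {y \<in> cand J (a0 \<le> k) (a0 + c) pJ. ww \<notin> wires_at J y}"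
  proof
    fix y assume "y \<in> emb ` cand I (a0 \<le> k) a0 pI"
    then obtain t where t: "t < length I" "a0 \<in> wires_at I t" "before (a0 \<le> k) pI t" "y = emb t"
      by (auto simp: cand_def)
    have "before (a0 \<le> k) pJ (emb t)" using assms t by (auto simp: corr_def)
    then show "y \<in> {y \<in> cand J (a0 \<le> k) (a0 + c) pJ. ww \<notin> wires_at J y}"
      using t emb_len[OF t(1)] wires_emb[OF t(1)] emb_old[OF t(1)] by (auto simp: cand_def)
  qed
qed

lemma K1:
  assumes "corr k a0 pI pJ" "next_node J (k + c) (a0 + c) pJ = None"
  shows "next_node I k a0 pI = None"
proof -
  have "cand J (a0 \<le> k) (a0 + c) pJ = {}" using next_node_NoneD[OF assms(2)] by simp
  then have "cand I (a0 \<le> k) a0 pI = {}" using old_cand[OF assms(1)] by auto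
  then show ?thesis unfolding next_node_cand by simp
qed

lemma K2:
  assumes "corr k a0 pI pJ" "next_node J (k + c) (a0 + c) pJ = Some y" "ww \<notin> wires_at J y"
  shows "\<exists>t<length I. y = emb t \<and> next_node I k a0 pI = Some t"
proof -
  have yc: "y \<in> cand J (a0 \<le> k) (a0 + c) pJ" using next_node_SomeD(1)[OF assms(2)] by simp
  have ext: "\<And>z. z \<in> cand J (a0 \<le> k) (a0 + c) pJ \<Longrightarrow> (if a0 \<le> k then z \<le> y else y \<le> z)"
  proof -
    fix z assume h: "z \<in> cand J (a0 \<le> k) (a0 + c) pJ"
    have "(if a0 + c \<le> k + c then z \<le> y else y \<le> z)"
      by (rule next_node_SomeD(2)[OF assms(2)]) (use h in simp)
    then show "(if a0 \<le> k then z \<le> y else y \<le> z)" by (simp only: add_le_cancel_right)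
  qed
  have "y \<in> emb ` cand I (a0 \<le> k) a0 pI" using old_cand[OF assms(1)] yc assms(3) by blast
  then obtain t where t: "t \<in> cand I (a0 \<le> k) a0 pI" "y = emb t" by blast
  have tl: "t < length I" using t by (auto simp: cand_def)
  have bnd: "\<And>x. x \<in> cand I (a0 \<le> k) a0 pI \<Longrightarrow> (if a0 \<le> k then x \<le> t else t \<le> x)"
  proof -
    fix x assume x: "x \<in> cand I (a0 \<le> k) a0 pI"
    then have xl: "x < length I" by (auto simp: cand_def)
    have "emb x \<in> cand J (a0 \<le> k) (a0 + c) pJ" using old_cand[OF assms(1)] x by blast
    from ext[OF this] have "(if a0 \<le> k then emb x \<le> emb t else emb t \<le> emb x)" using t(2) by (auto split: if_splits)
    then show "(if a0 \<le> k then x \<le> t else t \<le> x)" using emb_le_iff[OF xl tl] emb_le_iff[OF tl xl] by (simp split: if_splits)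
  qed
  have ne: "cand I (a0 \<le> k) a0 pI \<noteq> {}" using t by auto
  have "next_node I k a0 pI = Some t"
  proof (cases "a0 \<le> k")
    case True
    have "Max (cand I (a0 \<le> k) a0 pI) = t"
      by (rule Max_eqI) (use t bnd True in auto)
    then show ?thesis unfolding next_node_cand using ne True by simp
  next
    case False
    have "Min (cand I (a0 \<le> k) a0 pI) = t"
      by (rule Min_eqI) (use t bnd False in auto)
    then show ?thesis unfolding next_node_cand using ne False by simp
  qed
  then show ?thesis using t tl by blast
qed

lemma K3:
  assumes "corr k a0 pI pJ" "next_node J (k + c) (a0 + c) pJ = Some y" "ww \<in> wires_at J y"
  shows "corr k a0 pI (Some y)"
  unfolding corr_def
proof (intro allI impI)
  fix t assume tl: "t < length I" and ta: "a0 \<in> wires_at I t"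
  have yc: "y \<in> cand J (a0 \<le> k) (a0 + c) pJ" using next_node_SomeD(1)[OF assms(2)] by simp
  have ext: "\<And>z. z \<in> cand J (a0 \<le> k) (a0 + c) pJ \<Longrightarrow> (if a0 \<le> k then z \<le> y else y \<le> z)"
  proof -
    fix z assume h: "z \<in> cand J (a0 \<le> k) (a0 + c) pJ"
    have "(if a0 + c \<le> k + c then z \<le> y else y \<le> z)"
      by (rule next_node_SomeD(2)[OF assms(2)]) (use h in simp)
    then show "(if a0 \<le> k then z \<le> y else y \<le> z)" by (simp only: add_le_cancel_right)
  qed
  have ne: "emb t \<noteq> y" using emb_old[OF tl] assms(3) by auto
  show "before (a0 \<le> k) (Some y) (emb t) = before (a0 \<le> k) pI t"
  proof
    assume b: "before (a0 \<le> k) (Some y) (emb t)"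
    have "before (a0 \<le> k) pJ y" using yc by (simp add: cand_def)
    then have "before (a0 \<le> k) pJ (emb t)" using before_trans b by blast
    then show "before (a0 \<le> k) pI t" using assms(1) tl ta by (simp add: corr_def)
  next
    assume "before (a0 \<le> k) pI t"
    then have "t \<in> cand I (a0 \<le> k) a0 pI" using tl ta by (simp add: cand_def)
    then have "emb t \<in> cand J (a0 \<le> k) (a0 + c) pJ" using old_cand[OF assms(1)] by blast
    then have "(if a0 \<le> k then emb t \<le> y else y \<le> emb t)" using ext by blast
    then show "before (a0 \<le> k) (Some y) (emb t)" using ne by (auto simp: before_def split: if_splits)
  qed
qed

lemma corr_emb: "t0 < length I \<Longrightarrow> corr k a (Some t0) (Some (emb t0))"
  unfolding corr_def before_def using emb_less_iff by auto

lemma corr_None: "corr k a None None"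
  unfolding corr_def before_def by simp

lemma sound:
  "walk J (k + c) (a0 + c) pJ ps' \<Longrightarrow> nsw J ww (a0 + c) ps' \<Longrightarrow> corr k a0 pI pJ \<Longrightarrow> walk I k a0 pI (rl ps')"
proof (induction ps' arbitrary: a0 pI pJ)
  case Nil
  then show ?case using K1 by auto
next
  case (Cons x ps'')
  obtain y w where x: "x = (y, w)" by (cases x)
  have nx: "next_node J (k + c) (a0 + c) pJ = Some y" and wy: "w \<in> wires_at J y"
    and fb: "w = a0 + c \<longrightarrow> \<not> forbidden_pass J (k + c) y (a0 + c)"
    and wr: "walk J (k + c) w (Some y) ps''" using Cons.prems(1) unfolding x by auto
  have ns1: "ww \<in> wires_at J y \<longrightarrow> w = a0 + c" and ns2: "nsw J ww w ps''" using Cons.prems(2) unfolding x by auto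
  show ?case
  proof (cases "ww \<in> wires_at J y")
    case True
    then have "w = a0 + c" using ns1 by simp
    then show ?thesis unfolding x rl_Cons using True Cons.IH[of a0 "Some y" pI] wr ns2 K3[OF Cons.prems(3) nx True] by simp
  next
    case False
    obtain t where t: "t < length I" "y = emb t" "next_node I k a0 pI = Some t"
      using K2[OF Cons.prems(3) nx False] by blast
    obtain w0 where w0: "w0 \<in> wires_at I t" "w = w0 + c" using wy wires_emb[OF t(1)] t(2) by auto
    have a0t: "a0 \<in> wires_at I t" using next_node_SomeD(1)[OF t(3)] by (simp add: cand_def)
    have "walk I k w0 (Some t) (rl ps'')"
      using Cons.IH[of w0 "Some (emb t)" "Some t"] wr ns2 corr_emb[OF t(1)] w0 t by simp
    moreover have "w0 = a0 \<longrightarrow> \<not> forbidden_pass I k t a0" using fb w0 t forb_emb[OF t(1) a0t] by simp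
    ultimately show ?thesis unfolding x rl_Cons using False t w0 node_emb by simp
  qed
qed

lemma determ:
  "walk J k' a pJ ps1 \<Longrightarrow> walk J k' a pJ ps2 \<Longrightarrow> nsw J ww a ps1 \<Longrightarrow> nsw J ww a ps2 \<Longrightarrow> rl ps1 = rl ps2 \<Longrightarrow> ps1 = ps2"
proof (induction ps1 arbitrary: a pJ ps2)
  case Nil
  then show ?case by (cases ps2) auto
next
  case (Cons x r1)
  obtain y1 w1 where x: "x = (y1, w1)" by (cases x)
  show ?case
  proof (cases ps2)
    case Nil then show ?thesis using Cons.prems x by auto
  next
    case (Cons x2 r2)
    obtain y2 w2 where x2: "x2 = (y2, w2)" by (cases x2)
    have yy: "y1 = y2" using Cons.prems(1,2) x x2 Cons by auto
    have w1: "w1 \<in> wires_at J y1" and w2: "w2 \<in> wires_at J y1" using Cons.prems(1,2) x x2 Cons yy by auto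
    have yl: "y1 < length J" using walk_set[OF Cons.prems(1)] x by auto
    show ?thesis
    proof (cases "ww \<in> wires_at J y1")
      case True
      then have "w1 = a" "w2 = a" using Cons.prems(3,4) x x2 Cons yy by auto
      then show ?thesis using Cons.IH[of a "Some y1" r2] Cons.prems x x2 Cons yy True by (auto simp: rl_Cons)
    next
      case False
      obtain t where t: "t < length I" "y1 = emb t" using old_iff[OF yl] False by blast
      have "w1 - c = w2 - c" using Cons.prems(5) x x2 Cons yy False by (simp add: rl_Cons)
      moreover have "c \<le> w1" "c \<le> w2" using w1 w2 wires_emb[OF t(1)] t(2) by auto
      ultimately have ww12: "w1 = w2" by simp
      then show ?thesis using Cons.IH[of w1 "Some y1" r2] Cons.prems x x2 Cons yy False by (auto simp: rl_Cons)
    qed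
  qed
qed

end

context sim begin

definition Einv :: "nat \<Rightarrow> nat \<Rightarrow> nat option \<Rightarrow> nat option \<Rightarrow> (nat \<times> nat) list \<Rightarrow> (nat \<times> nat) list \<Rightarrow> bool" where
  "Einv k a0 pI pJ ps ps' = (\<forall>y w. (y, w) \<in> set ps' \<longrightarrow> ww \<in> wires_at J y \<longrightarrow>
      (\<exists>a p. w = a + c \<and> 1 \<le> a \<and> a \<le> N \<and> valid a p \<and> corr k a p (Some y) \<and>
         ((p = pI \<and> a = a0 \<and> before (a0 \<le> k) pJ y) \<or> p \<in> Some ` set (map fst ps))))"

lemma U: "corr k a p1 Y \<Longrightarrow> corr k a p2 Y \<Longrightarrow> valid a p1 \<Longrightarrow> valid a p2 \<Longrightarrow> p1 = p2"
proof (cases p1; cases p2)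
  fix q2 assume h: "corr k a p1 Y" "corr k a p2 Y" "valid a p1" "valid a p2" "p1 = None" "p2 = Some q2"
  then have "q2 < length I" "a \<in> wires_at I q2" by (auto simp: valid_def)
  then show "p1 = p2" using h by (auto simp: corr_def before_def)
next
  fix q1 assume h: "corr k a p1 Y" "corr k a p2 Y" "valid a p1" "valid a p2" "p1 = Some q1" "p2 = None"
  then have "q1 < length I" "a \<in> wires_at I q1" by (auto simp: valid_def)
  then show "p1 = p2" using h by (auto simp: corr_def before_def)
next
  fix q1 q2 assume h: "corr k a p1 Y" "corr k a p2 Y" "valid a p1" "valid a p2" "p1 = Some q1" "p2 = Some q2"
  then have a: "q1 < length I" "a \<in> wires_at I q1" "q2 < length I" "a \<in> wires_at I q2" by (auto simp: valid_def)
  have "before (a \<le> k) Y (emb q1) = before (a \<le> k) (Some q1) q1"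
       "before (a \<le> k) Y (emb q1) = before (a \<le> k) (Some q2) q1"
       "before (a \<le> k) Y (emb q2) = before (a \<le> k) (Some q1) q2"
       "before (a \<le> k) Y (emb q2) = before (a \<le> k) (Some q2) q2"
    using h a unfolding corr_def by auto
  then show "p1 = p2" using h by (auto simp: before_def split: if_splits)
qed simp

lemma two_wires: "x \<in> wires_at J y \<Longrightarrow> z \<in> wires_at J y \<Longrightarrow> ww \<in> wires_at J y \<Longrightarrow> x \<noteq> ww \<Longrightarrow> z \<noteq> ww \<Longrightarrow> x = z"
  by (auto simp: wires_at_def)

lemma complete:
  assumes "m = length ps * (length J + 1) + card (cand J (a0 \<le> k) (a0 + c) pJ)"
    and "walk I k a0 pI ps" "distinct (map fst ps)" "pI \<notin> Some ` set (map fst ps)" "valid a0 pI"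
    "1 \<le> a0" "a0 \<le> N" "1 \<le> k" "k < N" "corr k a0 pI pJ"
  shows "\<exists>ps'. walk J (k + c) (a0 + c) pJ ps' \<and> nsw J ww (a0 + c) ps' \<and> rl ps' = ps
     \<and> distinct (map fst ps') \<and> Einv k a0 pI pJ ps ps'"
  using assms
proof (induction m arbitrary: ps a0 pI pJ rule: less_induct)
  case (less m ps a0 pI pJ)
  consider (N) "next_node J (k + c) (a0 + c) pJ = None"
    | (New) y where "next_node J (k + c) (a0 + c) pJ = Some y" "ww \<in> wires_at J y"
    | (Old) y where "next_node J (k + c) (a0 + c) pJ = Some y" "ww \<notin> wires_at J y"
    by (cases "next_node J (k + c) (a0 + c) pJ") auto
  then show ?case
  proof cases
    case N
    have nI: "next_node I k a0 pI = None" using K1[OF less.prems(10) N] .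
    have "ps = []"
    proof (cases ps)
      case (Cons x r) then show ?thesis using less.prems(2) nI by (cases x) auto
    qed
    then have "a0 = Suc k" using less.prems(2) by simp
    then have "walk J (k + c) (a0 + c) pJ []" using N by simp
    moreover have "Einv k a0 pI pJ ps []" by (simp add: Einv_def)
    moreover have "nsw J ww (a0 + c) []" by simp
    moreover have "rl [] = ps" using \<open>ps = []\<close> by simp
    moreover have "distinct (map fst ([] :: (nat \<times> nat) list))" by simp
    ultimately show ?thesis by blast
  next
    case New
    note nx = New(1)
    have yc: "y \<in> cand J (a0 \<le> k) (a0 + c) pJ" using next_node_SomeD(1)[OF nx] by simp
    have c3: "corr k a0 pI (Some y)" using K3[OF less.prems(10) nx New(2)] .
    have sub: "cand J (a0 \<le> k) (a0 + c) (Some y) \<subset> cand J (a0 \<le> k) (a0 + c) pJ"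
    proof
      show "cand J (a0 \<le> k) (a0 + c) (Some y) \<subseteq> cand J (a0 \<le> k) (a0 + c) pJ"
      proof
        fix z assume z: "z \<in> cand J (a0 \<le> k) (a0 + c) (Some y)"
        have "before (a0 \<le> k) pJ y" using yc by (simp add: cand_def)
        then have "before (a0 \<le> k) pJ z" using z before_trans[of "a0 \<le> k" y z pJ] by (simp add: cand_def)
        then show "z \<in> cand J (a0 \<le> k) (a0 + c) pJ" using z by (simp add: cand_def)
      qed
      show "cand J (a0 \<le> k) (a0 + c) (Some y) \<noteq> cand J (a0 \<le> k) (a0 + c) pJ"
      proof -
        have "y \<notin> cand J (a0 \<le> k) (a0 + c) (Some y)" by (simp add: cand_def before_def)
        then show ?thesis using yc by blast
      qed
    qed
    have lt: "length ps * (length J + 1) + card (cand J (a0 \<le> k) (a0 + c) (Some y)) < m"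
      using psubset_card_mono[OF cand_finite sub] less.prems(1) by simp
    obtain rest where r: "walk J (k + c) (a0 + c) (Some y) rest" "nsw J ww (a0 + c) rest" "rl rest = ps"
       "distinct (map fst rest)" "Einv k a0 pI (Some y) ps rest"
      using less.IH[OF lt refl less.prems(2-9) c3] by blast
    have yl: "y < length J" and ya: "a0 + c \<in> wires_at J y" and yb: "before (a0 \<le> k) pJ y"
      using yc by (auto simp: cand_def)
    have ane: "a0 + c \<noteq> ww" using ww_ne less.prems(6,7) by blast
    have fb: "\<not> forbidden_pass J (k + c) y (a0 + c)" using newok[OF yl New(2) ya ane less.prems(8,9)] .
    have nin: "y \<notin> fst ` set rest"
    proof
      assume "y \<in> fst ` set rest"
      then obtain w' where w': "(y, w') \<in> set rest" by force
      obtain a p where ap: "w' = a + c" "1 \<le> a" "a \<le> N" "valid a p" "corr k a p (Some y)"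
        "(p = pI \<and> a = a0 \<and> before (a0 \<le> k) (Some y) y) \<or> p \<in> Some ` set (map fst ps)"
        using r(5)[unfolded Einv_def, rule_format, OF w' New(2)] by (elim exE conjE) (intro that, assumption+)
      have pin: "p \<in> Some ` set (map fst ps)" using ap(6) by (auto simp: before_def)
      have "w' \<in> wires_at J y" using walk_set[OF r(1) w'] by simp
      then have "a + c = a0 + c" using two_wires[OF _ ya New(2)] ane ww_ne[OF ap(2,3)] ap(1) by blast
      then have "a = a0" by simp
      have c3': "corr k a pI (Some y)" and v': "valid a pI" using c3 less.prems(5) \<open>a = a0\<close> by simp_all
      have "p = pI" using U[OF ap(5) c3' ap(4) v'] .
      then show False using pin less.prems(4) by simp
    qed
    let ?ps' = "(y, a0 + c) # rest"
    have "walk J (k + c) (a0 + c) pJ ?ps'" using nx ya fb r(1) by simp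
    moreover have "nsw J ww (a0 + c) ?ps'" using r(2) by simp
    moreover have "rl ?ps' = ps" using r(3) New(2) by (simp add: rl_Cons)
    moreover have "distinct (map fst ?ps')" using r(4) nin by simp
    moreover have "Einv k a0 pI pJ ps ?ps'"
      unfolding Einv_def
    proof (intro allI impI)
      fix y2 w2 assume m2: "(y2, w2) \<in> set ?ps'" and n2: "ww \<in> wires_at J y2"
      show "\<exists>a p. w2 = a + c \<and> 1 \<le> a \<and> a \<le> N \<and> valid a p \<and> corr k a p (Some y2) \<and>
         ((p = pI \<and> a = a0 \<and> before (a0 \<le> k) pJ y2) \<or> p \<in> Some ` set (map fst ps))"
      proof (cases "(y2, w2) = (y, a0 + c)")
        case True
        then show ?thesis using less.prems(5-7) c3 yb by blast
      next
        case False
        then have "(y2, w2) \<in> set rest" using m2 by auto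
        then obtain a p where ap: "w2 = a + c" "1 \<le> a" "a \<le> N" "valid a p" "corr k a p (Some y2)"
          "(p = pI \<and> a = a0 \<and> before (a0 \<le> k) (Some y) y2) \<or> p \<in> Some ` set (map fst ps)"
          using r(5)[unfolded Einv_def, rule_format, OF \<open>(y2, w2) \<in> set rest\<close> n2] by (elim exE conjE) (intro that, assumption+)
        have "(p = pI \<and> a = a0 \<and> before (a0 \<le> k) pJ y2) \<or> p \<in> Some ` set (map fst ps)"
          using ap(6) before_trans[of "a0 \<le> k" y y2 pJ] yb by blast
        then show ?thesis using ap by blast
      qed
    qed
    ultimately show ?thesis by blast
  next
    case Old
    note nx = Old(1)
    obtain t where t: "t < length I" "y = emb t" "next_node I k a0 pI = Some t"
      using K2[OF less.prems(10) nx Old(2)] by blast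
    obtain w0 ps0 where ps: "ps = (t, w0) # ps0"
    proof (cases ps)
      case Nil then show ?thesis using less.prems(2) t(3) by simp
    next
      case (Cons x r)
      obtain t1 w1 where x: "x = (t1, w1)" by (cases x)
      have "t1 = t" using less.prems(2) t(3) Cons x by simp
      then show ?thesis using that Cons x by blast
    qed
    have w0t: "w0 \<in> wires_at I t" and fbI: "w0 = a0 \<longrightarrow> \<not> forbidden_pass I k t a0"
      and wI: "walk I k w0 (Some t) ps0" using less.prems(2) ps by auto
    have a0t: "a0 \<in> wires_at I t" using next_node_SomeD(1)[OF t(3)] by (simp add: cand_def)
    have w0N: "1 \<le> w0" "w0 \<le> N" using wires_I[OF t(1)] w0t by auto
    have dist0: "distinct (map fst ps0)" and tn: "t \<notin> set (map fst ps0)" using less.prems(3) ps by auto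
    have cle: "card (cand J (w0 \<le> k) (w0 + c) (Some (emb t))) \<le> length J" by (rule cand_card_le)
    have lt: "length ps0 * (length J + 1) + card (cand J (w0 \<le> k) (w0 + c) (Some (emb t))) < m"
    proof -
      have "length ps0 * (length J + 1) + card (cand J (w0 \<le> k) (w0 + c) (Some (emb t)))
            < length ps0 * (length J + 1) + (length J + 1)" using cle by linarith
      also have "\<dots> = length ps * (length J + 1)" using ps by simp
      also have "\<dots> \<le> m" using less.prems(1) by simp
      finally show ?thesis .
    qed
    have vw0: "valid w0 (Some t)" using t(1) w0t by (simp add: valid_def)
    have nS: "Some t \<notin> Some ` set (map fst ps0)" using tn by auto
    obtain rest where r: "walk J (k + c) (w0 + c) (Some (emb t)) rest" "nsw J ww (w0 + c) rest" "rl rest = ps0"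
       "distinct (map fst rest)" "Einv k w0 (Some t) (Some (emb t)) ps0 rest"
      using less.IH[OF lt refl wI dist0 nS vw0 w0N less.prems(8,9) corr_emb[OF t(1)]] by blast
    let ?ps' = "(emb t, w0 + c) # rest"
    have wJ: "w0 + c \<in> wires_at J (emb t)" using wires_emb[OF t(1)] w0t by simp
    have fbJ: "w0 + c = a0 + c \<longrightarrow> \<not> forbidden_pass J (k + c) (emb t) (a0 + c)"
      using fbI forb_emb[OF t(1) a0t] by simp
    have old: "ww \<notin> wires_at J (emb t)" using emb_old[OF t(1)] .
    have nin: "emb t \<notin> fst ` set rest"
    proof
      assume "emb t \<in> fst ` set rest"
      then obtain w' where w': "(emb t, w') \<in> set rest" by force
      have "(node (emb t), w' - c) \<in> set ps0" using rl_mem[OF w' old] r(3) by simp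
      then show False using tn node_emb[OF t(1)] by force
    qed
    have "walk J (k + c) (a0 + c) pJ ?ps'" using nx t(2) wJ fbJ r(1) by simp
    moreover have "nsw J ww (a0 + c) ?ps'" using r(2) old by simp
    moreover have "rl ?ps' = ps" using r(3) old ps node_emb[OF t(1)] by (simp add: rl_Cons)
    moreover have "distinct (map fst ?ps')" using r(4) nin by simp
    moreover have "Einv k a0 pI pJ ps ?ps'"
      unfolding Einv_def
    proof (intro allI impI)
      fix y2 w2 assume m2: "(y2, w2) \<in> set ?ps'" and n2: "ww \<in> wires_at J y2"
      then have "(y2, w2) \<in> set rest" using old by auto
      then obtain a p where ap: "w2 = a + c" "1 \<le> a" "a \<le> N" "valid a p" "corr k a p (Some y2)"
          "(p = Some t \<and> a = w0 \<and> before (w0 \<le> k) (Some (emb t)) y2) \<or> p \<in> Some ` set (map fst ps0)"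
          using r(5)[unfolded Einv_def, rule_format, OF \<open>(y2, w2) \<in> set rest\<close> n2] by (elim exE conjE) (intro that, assumption+)
      have "p \<in> Some ` set (map fst ps)" using ap(6) ps by auto
      then show "\<exists>a p. w2 = a + c \<and> 1 \<le> a \<and> a \<le> N \<and> valid a p \<and> corr k a p (Some y2) \<and>
         ((p = pI \<and> a = a0 \<and> before (a0 \<le> k) pJ y2) \<or> p \<in> Some ` set (map fst ps))"
        using ap by blast
    qed
    ultimately show ?thesis by blast
  qed
qed

end

lemma G1: "walk j k' a prev ps \<Longrightarrow> nsw j w a ps \<Longrightarrow> a \<noteq> w \<Longrightarrow> Suc k' \<noteq> w"
proof (induction ps arbitrary: a prev)
  case Nil then show ?case by simp
next
  case (Cons x ps)
  obtain t v where x: "x = (t, v)" by (cases x)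
  have "v \<noteq> w"
  proof (cases "w \<in> wires_at j t")
    case True then show ?thesis using Cons.prems x by auto
  next
    case False
    have "v \<in> wires_at j t" using Cons.prems(1) x by simp
    then show ?thesis using False by auto
  qed
  then show ?case using Cons.IH[of v "Some t"] Cons.prems x by simp
qed

lemma G2: "walk j k' w prev ps \<Longrightarrow> nsw j w w ps \<Longrightarrow> Suc k' = w"
proof (induction ps arbitrary: prev)
  case Nil then show ?case by simp
next
  case (Cons x ps)
  obtain t v where x: "x = (t, v)" by (cases x)
  have nx: "next_node j k' w prev = Some t" using Cons.prems(1) x by simp
  have "w \<in> wires_at j t" using next_node_SomeD(1)[OF nx] by (simp add: cand_def)
  then have "v = w" using Cons.prems(2) x by simp
  then show ?case using Cons.IH[of "Some t"] Cons.prems x by simp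
qed

lemma GP_finite: "finite (GP K j)"
proof -
  define W where "W = (\<Union>t<length j. wires_at j t)"
  have fW: "finite W" unfolding W_def wires_at_def by auto
  have "GP K j \<subseteq> {..<K} \<times> {ps. set ps \<subseteq> {..<length j} \<times> W \<and> length ps \<le> length j}"
  proof
    fix P assume "P \<in> GP K j"
    then obtain k ps where P: "P = (k, ps)" "k < K" "walk j k k None ps" "distinct (map fst ps)"
      by (auto simp: GP_def rigorous_walk)
    have s: "set ps \<subseteq> {..<length j} \<times> W"
      using walk_set[OF P(3)] unfolding W_def by fastforce
    have "set (map fst ps) \<subseteq> {..<length j}" using s by auto
    then have "card (set (map fst ps)) \<le> length j" using card_mono[of "{..<length j}"] by fastforce
    then have "length ps \<le> length j" using distinct_card[OF P(4)] by simp
    then show "P \<in> {..<K} \<times> {ps. set ps \<subseteq> {..<length j} \<times> W \<and> length ps \<le> length j}"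
      using P s by auto
  qed
  moreover have "finite ({..<K} \<times> {ps. set ps \<subseteq> {..<length j} \<times> W \<and> length ps \<le> length j})"
    using finite_lists_length_le[of "{..<length j} \<times> W" "length j"] fW by auto
  ultimately show ?thesis by (rule finite_subset)
qed

context sim begin

lemma rl_mem_rev: "(a, b) \<in> set (rl r) \<Longrightarrow> \<exists>y w. (y, w) \<in> set r \<and> ww \<notin> wires_at J y \<and> a = node y \<and> b = w - c"
  by (auto simp: rl_def)

lemma rl_distinct: "(\<And>t w. (t, w) \<in> set ps \<Longrightarrow> t < length J) \<Longrightarrow> distinct (map fst ps) \<Longrightarrow> distinct (map fst (rl ps))"
proof (induction ps)
  case Nil then show ?case by simp
next
  case (Cons x r)
  obtain y w where x: "x = (y, w)" by (cases x)
  have IH: "distinct (map fst (rl r))" using Cons x by auto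
  show ?case
  proof (cases "ww \<in> wires_at J y")
    case True then show ?thesis using IH x by (simp add: rl_Cons)
  next
    case False
    have yl: "y < length J" using Cons.prems(1)[of y w] x by simp
    obtain t where t: "t < length I" "y = emb t" using old_iff[OF yl] False by blast
    have "node y \<notin> fst ` set (rl r)"
    proof
      assume "node y \<in> fst ` set (rl r)"
      then obtain b where "(node y, b) \<in> set (rl r)" by force
      then obtain y' w' where y': "(y', w') \<in> set r" "ww \<notin> wires_at J y'" "node y = node y'"
        using rl_mem_rev by blast
      have y'l: "y' < length J" using Cons.prems(1)[of y' w'] y' by simp
      obtain t' where t': "t' < length I" "y' = emb t'" using old_iff[OF y'l] y'(2) by blast
      have "t = t'" using y'(3) t t' node_emb by simp
      then have "y = y'" using t t' by simp
      then show False using Cons.prems(2) x y'(1) by force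
    qed
    then show ?thesis using IH x False by (simp add: rl_Cons)
  qed
qed

definition RR :: "path \<Rightarrow> path" where "RR P = (fst P - c, rl (snd P))"

theorem assemble:
  assumes c1: "c \<le> 1"
    and kS: "\<And>k' ps. (k', ps) \<in> GP (Suc N) J \<Longrightarrow> no_switch_on_wire J ww (k', ps) \<Longrightarrow> c \<le> k' \<and> 1 \<le> k' - c \<and> k' - c < N"
  shows "(\<exists>\<Psi> :: path \<Rightarrow> path.
         inj_on \<Psi> (GP N I)
       \<and> \<Psi> ` GP N I = {P \<in> GP (Suc N) J. no_switch_on_wire J ww P}
       \<and> (\<forall>P \<in> GP N I. RR (\<Psi> P) = P))
    \<and> card (GP (Suc N) J) = card (GP N I)
        + card {P \<in> GP (Suc N) J. \<not> no_switch_on_wire J ww P}"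
proof -
  define S where "S = {P \<in> GP (Suc N) J. no_switch_on_wire J ww P}"
  have facts: "walk J k' k' None ps \<and> distinct (map fst ps) \<and> nsw J ww k' ps \<and> c \<le> k' \<and> 1 \<le> k' - c \<and> k' - c < N"
    if "(k', ps) \<in> S" for k' ps
  proof -
    have g: "(k', ps) \<in> GP (Suc N) J" and ns: "no_switch_on_wire J ww (k', ps)" using that by (auto simp: S_def)
    have w: "walk J k' k' None ps" "distinct (map fst ps)" using g by (auto simp: GP_def rigorous_walk)
    have "nsw J ww k' ps" using ns no_switch_nsw[of ps J ww k'] walk_set[OF w(1)] by blast
    then show ?thesis using w kS[OF g ns] by blast
  qed
  have a: "RR P \<in> GP N I" if "P \<in> S" for P
  proof -
    obtain k' ps where P: "P = (k', ps)" by (cases P)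
    have f: "walk J k' k' None ps" "distinct (map fst ps)" "nsw J ww k' ps" "c \<le> k'" "1 \<le> k' - c" "k' - c < N"
      using facts that P by auto
    define k where "k = k' - c"
    have kk: "k' = k + c" using f(4) k_def by simp
    have "walk I k k None (rl ps)" using sound[of k k None ps None] f(1,3) corr_None kk by simp
    moreover have "distinct (map fst (rl ps))" using rl_distinct f(2) walk_set[OF f(1)] by blast
    ultimately show ?thesis using P f k_def by (simp add: RR_def GP_def rigorous_walk)
  qed
  have b: "inj_on RR S"
  proof
    fix P1 P2 assume P1: "P1 \<in> S" and P2: "P2 \<in> S" and eq: "RR P1 = RR P2"
    obtain k1 ps1 where p1: "P1 = (k1, ps1)" by (cases P1)
    obtain k2 ps2 where p2: "P2 = (k2, ps2)" by (cases P2)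
    have f1: "walk J k1 k1 None ps1" "nsw J ww k1 ps1" "c \<le> k1" using facts P1 p1 by auto
    have f2: "walk J k2 k2 None ps2" "nsw J ww k2 ps2" "c \<le> k2" using facts P2 p2 by auto
    have "k1 = k2" using eq p1 p2 f1(3) f2(3) by (simp add: RR_def) arith
    moreover have "ps1 = ps2" using determ[of k1 k1 None ps1 ps2] f1 f2 eq p1 p2 \<open>k1 = k2\<close> by (simp add: RR_def)
    ultimately show "P1 = P2" using p1 p2 by simp
  qed
  have cc: "\<exists>P\<in>S. RR P = Q" if q: "Q \<in> GP N I" for Q
  proof -
    obtain k ps where Q: "Q = (k, ps)" "1 \<le> k" "k < N" "walk I k k None ps" "distinct (map fst ps)"
      using q by (auto simp: GP_def rigorous_walk)
    obtain ps' where r: "walk J (k + c) (k + c) None ps'" "nsw J ww (k + c) ps'" "rl ps' = ps" "distinct (map fst ps')"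
      using complete[OF refl Q(4) Q(5) _ _ Q(2) _ Q(2) Q(3) corr_None] Q(3) by (auto simp: valid_def)
    have "(k + c, ps') \<in> GP (Suc N) J" using r Q c1 by (simp add: GP_def rigorous_walk)
    moreover have "no_switch_on_wire J ww (k + c, ps')"
      using no_switch_nsw[of ps' J ww "k + c"] walk_set[OF r(1)] r(2) by blast
    ultimately have "(k + c, ps') \<in> S" by (simp add: S_def)
    moreover have "RR (k + c, ps') = Q" using r Q by (simp add: RR_def)
    ultimately show ?thesis by blast
  qed
  have img: "RR ` S = GP N I" using a cc by blast
  have bij: "bij_betw RR S (GP N I)" using b img by (simp add: bij_betw_def)
  define \<Psi> where "\<Psi> = inv_into S RR"
  have bij2: "bij_betw \<Psi> (GP N I) S" unfolding \<Psi>_def by (rule bij_betw_inv_into[OF bij])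
  have r: "\<forall>P \<in> GP N I. RR (\<Psi> P) = P" unfolding \<Psi>_def using img by (simp add: f_inv_into_f)
  have fin: "finite (GP (Suc N) J)" by (rule GP_finite)
  have "GP (Suc N) J = S \<union> {P \<in> GP (Suc N) J. \<not> no_switch_on_wire J ww P}" by (auto simp: S_def)
  moreover have "S \<inter> {P \<in> GP (Suc N) J. \<not> no_switch_on_wire J ww P} = {}" by (auto simp: S_def)
  ultimately have "card (GP (Suc N) J) = card S + card {P \<in> GP (Suc N) J. \<not> no_switch_on_wire J ww P}"
    using fin card_Un_disjoint[of S "{P \<in> GP (Suc N) J. \<not> no_switch_on_wire J ww P}"]
    by (metis (no_types, lifting) finite_Un)
  moreover have "card S = card (GP N I)" using bij_betw_same_card[OF bij] .
  ultimately show ?thesis using bij2 r unfolding S_def bij_betw_def by auto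
qed

end

lemma wires_range: "set j \<subseteq> {1..<K} \<Longrightarrow> t < length j \<Longrightarrow> wires_at j t \<subseteq> {1..K}"
proof -
  assume s: "set j \<subseteq> {1..<K}" and t: "t < length j"
  have jt: "1 \<le> j ! t" "j ! t < K" using s t nth_mem by fastforce+
  have st: "set (take t j) \<subseteq> {1..<K}" using s set_take_subset by fast
  show ?thesis unfolding wires_at_def using word_perm_range[OF st, of "j ! t"] word_perm_range[OF st, of "Suc (j ! t)"] jt
    by auto
qed

lemma other_ww: "a \<in> wires_at j u \<Longrightarrow> w \<in> wires_at j u \<Longrightarrow> a \<noteq> w \<Longrightarrow> other_wire j u a = w"
  by (auto simp: wires_at_def other_wire_def)

lemma take_rev_upt: "r \<le> n \<Longrightarrow> take r (rev [1..<Suc n]) = rev [Suc n - r..<Suc n]"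
proof -
  assume r: "r \<le> n"
  have e: "Suc n = (Suc n - r) + r" using r by simp
  have "[1..<(Suc n - r) + r] = [1..<Suc n - r] @ [Suc n - r..<(Suc n - r) + r]"
    by (rule upt_add_eq_append) (use r in arith)
  then have "[1..<Suc n] = [1..<Suc n - r] @ [Suc n - r..<Suc n]" using e by metis
  then have "rev [1..<Suc n] = rev [Suc n - r..<Suc n] @ rev [1..<Suc n - r]" by (metis rev_append)
  moreover have "length (rev [Suc n - r..<Suc n]) = r" using r by (simp del: upt_Suc)
  ultimately show ?thesis by (simp del: upt_Suc)
qed

lemma rev_upt_nth: "r < n \<Longrightarrow> rev [1..<Suc n] ! r = n - r"
proof -
  assume r: "r < n"
  have "rev [1..<Suc n] ! r = [1..<Suc n] ! (n - Suc r)" using r by (simp add: rev_nth del: upt_Suc)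
  also have "\<dots> = n - r" using r by (subst nth_upt) auto
  finally show ?thesis .
qed

lemma sh_Suc[simp]: "sh f (Suc q) = Suc (f q)" by (simp add: sh_def)
lemma sh_0[simp]: "sh f 0 = 0" by (simp add: sh_def)

lemma Mn_arith: "Suc n * (Suc n - 1) div 2 = n * (n - 1) div 2 + n"
proof (cases n)
  case 0 then show ?thesis by simp
next
  case (Suc m)
  have "Suc n * (Suc n - 1) = n * (n - 1) + 2 * n" using Suc by (simp add: algebra_simps)
  then show ?thesis by simp
qed


locale base =
  fixes n M p :: nat and i :: "nat list"
  assumes len: "length i = M" and si: "set i \<subseteq> {1..<n}" and pM: "p \<le> M"
begin

definition embf :: "nat \<Rightarrow> nat" where "embf t = (if t < p then t else t + n)"
definition nodef :: "nat \<Rightarrow> nat" where "nodef y = (if y < p then y else y - n)"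

lemma si_take: "set (take t i) \<subseteq> {1..<n}" using si set_take_subset by fast
lemma si_drop: "set (take t (drop p i)) \<subseteq> {1..<n}" using si set_take_subset set_drop_subset by fast
lemma si_drop': "set (drop p i) \<subseteq> {1..<n}" using si set_drop_subset by fast

lemma take_split: "p \<le> t \<Longrightarrow> take t i = take p i @ take (t - p) (drop p i)"
  using take_add[of p "t - p" i] by simp

lemma i_nth: "t < M \<Longrightarrow> 1 \<le> i ! t \<and> i ! t < n"
  using si len nth_mem by fastforce

lemma emb_facts:
  "\<And>t1 t2. t1 < t2 \<Longrightarrow> t2 < M \<Longrightarrow> embf t1 < embf t2"
  "\<And>t. t < M \<Longrightarrow> embf t < M + n"
  "\<And>t. t < M \<Longrightarrow> nodef (embf t) = t"
  by (auto simp: embf_def nodef_def)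

lemma emb_char: "y < M + n \<Longrightarrow> (\<exists>t<M. y = embf t) = (y < p \<or> p + n \<le> y)"
  unfolding embf_def
proof
  assume "y < M + n" "\<exists>t<M. y = (if t < p then t else t + n)"
  then show "y < p \<or> p + n \<le> y" by (auto split: if_splits)
next
  assume y: "y < M + n" "y < p \<or> p + n \<le> y"
  show "\<exists>t<M. y = (if t < p then t else t + n)"
  proof (cases "y < p")
    case True then show ?thesis using pM by (intro exI[of _ y]) auto
  next
    case False then show ?thesis using y by (intro exI[of _ "y - n"]) auto
  qed
qed

definition JD :: "nat list" where "JD = take p i @ rev [1..<Suc n] @ map Suc (drop p i)"

lemma lenD: "length JD = M + n" using len pM by (simp add: JD_def)

lemma D1: "t < p \<Longrightarrow> take t JD = take t i \<and> JD ! t = i ! t"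
  using len pM by (simp add: JD_def nth_append min_def)

lemma D2: "p \<le> t \<Longrightarrow> t < M \<Longrightarrow> take (t + n) JD = take p i @ rev [1..<Suc n] @ map Suc (take (t - p) (drop p i))
   \<and> JD ! (t + n) = Suc (i ! t)"
  using len pM by (simp add: JD_def nth_append take_map del: upt_Suc) (use len pM in arith)

lemma D3: "r < n \<Longrightarrow> take (p + r) JD = take p i @ rev [Suc n - r..<Suc n] \<and> JD ! (p + r) = n - r"
  using len pM take_rev_upt[of r n] rev_upt_nth[of r n] by (simp add: JD_def nth_append del: upt_Suc)

lemma cD: "1 \<le> x \<Longrightarrow> x \<le> n \<Longrightarrow> word_perm (rev [1..<Suc n]) (Suc x) = x"
  using word_perm_desc[of 1 n "Suc x"] by (simp del: upt_Suc)

lemma Dpos: "p \<le> t \<Longrightarrow> t < M \<Longrightarrow> 1 \<le> q \<Longrightarrow> q \<le> n \<Longrightarrow> word_perm (take (t + n) JD) (Suc q) = word_perm (take t i) q"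
proof -
  assume a: "p \<le> t" "t < M" "1 \<le> q" "q \<le> n"
  define \<tau> where "\<tau> = word_perm (take (t - p) (drop p i))"
  have r: "1 \<le> \<tau> q \<and> \<tau> q \<le> n" unfolding \<tau>_def using word_perm_range[OF si_drop a(3,4)] .
  have "word_perm (take (t + n) JD) (Suc q) = word_perm (take p i) (word_perm (rev [1..<Suc n]) (Suc (\<tau> q)))"
    using D2[OF a(1,2)] by (simp add: word_perm_append word_perm_map_Suc \<tau>_def del: upt_Suc)
  also have "\<dots> = word_perm (take p i) (\<tau> q)" using cD r by simp
  also have "\<dots> = word_perm (take t i) q" using take_split[OF a(1)] by (simp add: word_perm_append \<tau>_def)
  finally show ?thesis .
qed

lemma D_pos:
  assumes "t < M"
  shows "word_perm (take (embf t) JD) (JD ! embf t) = word_perm (take t i) (i ! t) + 0"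
    "word_perm (take (embf t) JD) (Suc (JD ! embf t)) = word_perm (take t i) (Suc (i ! t)) + 0"
proof -
  have it: "1 \<le> i ! t" "i ! t < n" using i_nth[OF assms] by auto
  show "word_perm (take (embf t) JD) (JD ! embf t) = word_perm (take t i) (i ! t) + 0"
  proof (cases "t < p")
    case True then show ?thesis using D1 by (simp add: embf_def)
  next
    case False then show ?thesis using D2[of t] Dpos[of t "i ! t"] assms it by (simp add: embf_def)
  qed
  show "word_perm (take (embf t) JD) (Suc (JD ! embf t)) = word_perm (take t i) (Suc (i ! t)) + 0"
  proof (cases "t < p")
    case True then show ?thesis using D1 by (simp add: embf_def)
  next
    case False then show ?thesis using D2[of t] Dpos[of t "Suc (i ! t)"] assms it by (simp add: embf_def)
  qed
qed

lemma setJD: "set JD \<subseteq> {1..<Suc n}"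
proof -
  have "set (take p i) \<subseteq> {1..<Suc n}" using si_take[of p] by auto
  moreover have "set (rev [1..<Suc n]) \<subseteq> {1..<Suc n}" by auto
  moreover have "set (map Suc (drop p i)) \<subseteq> {1..<Suc n}" using si_drop' by auto
  ultimately show ?thesis by (simp add: JD_def del: upt_Suc)
qed

lemma wires_i: "t < M \<Longrightarrow> wires_at i t \<subseteq> {1..n}"
  using wires_range[OF si] len by simp

lemma D_new: "p \<le> y \<Longrightarrow> y < p + n \<Longrightarrow> Suc n \<in> wires_at JD y"
proof -
  assume y: "p \<le> y" "y < p + n"
  define r where "r = y - p"
  have r: "r < n" "y = p + r" using y r_def by auto
  have "word_perm (take y JD) (Suc (JD ! y)) = word_perm (take p i) (word_perm (rev [Suc n - r..<Suc n]) (Suc (n - r)))"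
    using D3[OF r(1)] r(2) by (simp add: word_perm_append del: upt_Suc)
  also have "word_perm (rev [Suc n - r..<Suc n]) (Suc (n - r)) = Suc n"
  proof -
    have e: "Suc n - r = Suc (n - r)" using r(1) by simp
    show ?thesis using word_perm_desc[of "Suc n - r" n "Suc (n - r)"] r(1) unfolding e by (simp del: upt_Suc)
  qed
  also have "word_perm (take p i) (Suc n) = Suc n" using word_perm_fix[OF si_take] by simp
  finally show ?thesis unfolding wires_at_def by simp
qed

lemma simD: "sim i JD embf nodef 0 n (Suc n)"
proof (unfold_locales, goal_cases)
  case (1 t1 t2) then show ?case using emb_facts len by auto
next
  case (2 t) then show ?case using emb_facts len lenD by auto
next
  case (3 t) then show ?case using emb_facts len by auto
next
  case (4 y)
  have wo: "Suc n \<notin> wires_at JD (embf t)" if "t < M" for t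
  proof -
    have "wires_at JD (embf t) = wires_at i t" using D_pos[OF that] by (simp add: wires_at_def)
    then show ?thesis using wires_i[OF that] by auto
  qed
  show ?case
  proof
    assume "Suc n \<notin> wires_at JD y"
    then have "y < p \<or> p + n \<le> y" using D_new[of y] by linarith
    then show "\<exists>t<length i. y = embf t" using emb_char[of y] 4 lenD len by simp
  next
    assume "\<exists>t<length i. y = embf t"
    then show "Suc n \<notin> wires_at JD y" using wo len by auto
  qed
next
  case (5 t) then show ?case using D_pos len by simp
next
  case (6 t) then show ?case using D_pos len by simp
next
  case (7 t) then show ?case using wires_i len by simp
next
  case (8 a) then show ?case by simp
next
  case (9 u a k)
  have ow: "other_wire JD u a = Suc n" using other_ww[OF 9(3,2,4)] .
  have "a \<le> Suc n" using wires_range[OF setJD 9(1)] 9(3) by auto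
  then show ?case using 9(5,6) ow unfolding forbidden_pass_def Let_def by auto
qed

lemma D_sigma: "word_perm i = longest n \<Longrightarrow> M = n * (n - 1) div 2 \<Longrightarrow> JD \<in> Sigma (Suc n)"
proof -
  assume wi: "word_perm i = longest n" and Mdef: "M = n * (n - 1) div 2"
  define \<sigma> where "\<sigma> = word_perm (take p i)"
  define \<tau> where "\<tau> = word_perm (drop p i)"
  have st: "\<And>q. \<sigma> (\<tau> q) = longest n q" using wi append_take_drop_id[of p i]
    unfolding \<sigma>_def \<tau>_def by (metis comp_apply word_perm_append)
  have wJ: "\<And>q. word_perm JD q = \<sigma> (word_perm (rev [1..<Suc n]) (sh \<tau> q))"
    unfolding JD_def \<sigma>_def \<tau>_def by (simp add: word_perm_append word_perm_map_Suc del: upt_Suc)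
  have "word_perm JD q = longest (Suc n) q" for q
  proof -
    consider "q = 0" | "q = 1" | "2 \<le> q" "q \<le> Suc n" | "Suc n < q" by linarith
    then show ?thesis
    proof cases
      case 1
      have "word_perm (rev [1..<Suc n]) 0 = 0" using word_perm_desc[of 1 n 0] by (simp del: upt_Suc)
      moreover have "\<sigma> 0 = 0" unfolding \<sigma>_def using word_perm_fix[OF si_take] by simp
      ultimately show ?thesis using wJ 1 by (simp add: longest_def)
    next
      case 2
      have "\<tau> 0 = 0" unfolding \<tau>_def using word_perm_fix[OF si_drop'] by simp
      moreover have "word_perm (rev [1..<Suc n]) 1 = Suc n" using word_perm_desc[of 1 n 1] by (simp del: upt_Suc)
      moreover have "\<sigma> (Suc n) = Suc n" unfolding \<sigma>_def using word_perm_fix[OF si_take] by simp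
      ultimately show ?thesis using wJ 2 by (simp add: longest_def sh_def)
    next
      case 33: 3
      define x where "x = q - 1"
      have 3: "q = Suc x" "1 \<le> x" "x \<le> n" using 33 x_def by auto
      have r: "1 \<le> \<tau> x \<and> \<tau> x \<le> n" unfolding \<tau>_def using word_perm_range[OF si_drop' 3(2,3)] .
      have "word_perm JD q = \<sigma> (\<tau> x)" using wJ 3(1) cD r by simp
      also have "\<dots> = Suc n - x" using st 3 by (simp add: longest_def)
      finally show ?thesis using 3 by (simp add: longest_def)
    next
      case 4
      have "\<tau> (q - 1) = q - 1" unfolding \<tau>_def using word_perm_fix[OF si_drop'] 4 by simp
      then have "sh \<tau> q = q" using 4 by (simp add: sh_def)
      moreover have "word_perm (rev [1..<Suc n]) q = q" using word_perm_desc[of 1 n q] 4 by (simp del: upt_Suc)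
      moreover have "\<sigma> q = q" unfolding \<sigma>_def using word_perm_fix[OF si_take] 4 by simp
      ultimately show ?thesis using wJ 4 by (simp add: longest_def)
    qed
  qed
  then have "word_perm JD = longest (Suc n)" by auto
  moreover have "length JD = Suc n * (Suc n - 1) div 2" using lenD Mdef Mn_arith by simp
  ultimately show ?thesis using setJD by (simp add: Sigma_def)
qed

end

context base begin

definition JA :: "nat list" where "JA = map Suc (take p i) @ [1..<Suc n] @ drop p i"

lemma lenA: "length JA = M + n" using len pM by (simp add: JA_def del: upt_Suc)

lemma A1: "t < p \<Longrightarrow> take t JA = map Suc (take t i) \<and> JA ! t = Suc (i ! t)"
  using len pM by (simp add: JA_def nth_append min_def take_map del: upt_Suc)

lemma A2: "p \<le> t \<Longrightarrow> t < M \<Longrightarrow> take (t + n) JA = map Suc (take p i) @ [1..<Suc n] @ take (t - p) (drop p i)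
   \<and> JA ! (t + n) = i ! t"
  using len pM by (simp add: JA_def nth_append del: upt_Suc) (use len pM in arith)

lemma A3: "r < n \<Longrightarrow> take (p + r) JA = map Suc (take p i) @ [1..<Suc r] \<and> JA ! (p + r) = Suc r"
  using len pM by (simp add: JA_def nth_append take_upt del: upt_Suc)

lemma uA: "1 \<le> x \<Longrightarrow> x \<le> n \<Longrightarrow> word_perm [1..<Suc n] x = Suc x"
  using word_perm_asc[of n x] by (simp del: upt_Suc)

lemma Apos: "p \<le> t \<Longrightarrow> t < M \<Longrightarrow> 1 \<le> q \<Longrightarrow> q \<le> n \<Longrightarrow> word_perm (take (t + n) JA) q = word_perm (take t i) q + 1"
proof -
  assume a: "p \<le> t" "t < M" "1 \<le> q" "q \<le> n"
  define \<tau> where "\<tau> = word_perm (take (t - p) (drop p i))"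
  have r: "1 \<le> \<tau> q \<and> \<tau> q \<le> n" unfolding \<tau>_def using word_perm_range[OF si_drop a(3,4)] .
  have "word_perm (take (t + n) JA) q = sh (word_perm (take p i)) (word_perm [1..<Suc n] (\<tau> q))"
    using A2[OF a(1,2)] by (simp add: word_perm_append word_perm_map_Suc \<tau>_def del: upt_Suc)
  also have "\<dots> = word_perm (take p i) (\<tau> q) + 1" using uA r by simp
  also have "\<dots> = word_perm (take t i) q + 1" using take_split[OF a(1)] by (simp add: word_perm_append \<tau>_def)
  finally show ?thesis .
qed

lemma A_pos:
  assumes "t < M"
  shows "word_perm (take (embf t) JA) (JA ! embf t) = word_perm (take t i) (i ! t) + 1"
    "word_perm (take (embf t) JA) (Suc (JA ! embf t)) = word_perm (take t i) (Suc (i ! t)) + 1"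
proof -
  have it: "1 \<le> i ! t" "i ! t < n" using i_nth[OF assms] by auto
  show "word_perm (take (embf t) JA) (JA ! embf t) = word_perm (take t i) (i ! t) + 1"
  proof (cases "t < p")
    case True then show ?thesis using A1 by (simp add: embf_def word_perm_map_Suc)
  next
    case False then show ?thesis using A2[of t] Apos[of t "i ! t"] assms it by (simp add: embf_def)
  qed
  show "word_perm (take (embf t) JA) (Suc (JA ! embf t)) = word_perm (take t i) (Suc (i ! t)) + 1"
  proof (cases "t < p")
    case True then show ?thesis using A1 by (simp add: embf_def word_perm_map_Suc)
  next
    case False then show ?thesis using A2[of t] Apos[of t "Suc (i ! t)"] assms it by (simp add: embf_def)
  qed
qed

lemma setJA: "set JA \<subseteq> {1..<Suc n}"
proof -
  have "set (map Suc (take p i)) \<subseteq> {1..<Suc n}" using si_take[of p] by auto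
  moreover have "set [1..<Suc n] \<subseteq> {1..<Suc n}" by auto
  moreover have "set (drop p i) \<subseteq> {1..<Suc n}" using si_drop' by auto
  ultimately show ?thesis by (simp add: JA_def del: upt_Suc)
qed

lemma A_new: "p \<le> y \<Longrightarrow> y < p + n \<Longrightarrow> 1 \<in> wires_at JA y"
proof -
  assume y: "p \<le> y" "y < p + n"
  define r where "r = y - p"
  have r: "r < n" "y = p + r" using y r_def by auto
  have "word_perm (take y JA) (JA ! y) = sh (word_perm (take p i)) (word_perm [1..<Suc r] (Suc r))"
    using A3[OF r(1)] r(2) by (simp add: word_perm_append word_perm_map_Suc del: upt_Suc)
  also have "word_perm [1..<Suc r] (Suc r) = 1" using word_perm_asc[of r "Suc r"] by (simp del: upt_Suc)
  also have "sh (word_perm (take p i)) 1 = 1" using word_perm_fix[OF si_take] by (simp add: sh_def)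
  finally show ?thesis unfolding wires_at_def by simp
qed

lemma simA: "sim i JA embf nodef 1 n 1"
proof (unfold_locales, goal_cases)
  case (1 t1 t2) then show ?case using emb_facts len by auto
next
  case (2 t) then show ?case using emb_facts len lenA by auto
next
  case (3 t) then show ?case using emb_facts len by auto
next
  case (4 y)
  have wo: "1 \<notin> wires_at JA (embf t)" if "t < M" for t
  proof -
    have "wires_at JA (embf t) = (\<lambda>x. x + 1) ` wires_at i t" using A_pos[OF that] by (simp add: wires_at_def)
    then show ?thesis using wires_i[OF that] by auto
  qed
  show ?case
  proof
    assume "1 \<notin> wires_at JA y"
    then have "y < p \<or> p + n \<le> y" using A_new[of y] by linarith
    then show "\<exists>t<length i. y = embf t" using emb_char[of y] 4 lenA len by simp
  next
    assume "\<exists>t<length i. y = embf t"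
    then show "1 \<notin> wires_at JA y" using wo len by auto
  qed
next
  case (5 t) then show ?case using A_pos len by simp
next
  case (6 t) then show ?case using A_pos len by simp
next
  case (7 t) then show ?case using wires_i len by simp
next
  case (8 a) then show ?case by simp
next
  case (9 u a k)
  have ow: "other_wire JA u a = 1" using other_ww[OF 9(3,2,4)] .
  have "1 \<le> a" using wires_range[OF setJA 9(1)] 9(3) by auto
  then show ?case using 9(4,5,6) ow unfolding forbidden_pass_def Let_def by auto
qed

lemma A_sigma: "word_perm i = longest n \<Longrightarrow> M = n * (n - 1) div 2 \<Longrightarrow> JA \<in> Sigma (Suc n)"
proof -
  assume wi: "word_perm i = longest n" and Mdef: "M = n * (n - 1) div 2"
  define \<sigma> where "\<sigma> = word_perm (take p i)"
  define \<tau> where "\<tau> = word_perm (drop p i)"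
  have st: "\<And>q. \<sigma> (\<tau> q) = longest n q" using wi append_take_drop_id[of p i]
    unfolding \<sigma>_def \<tau>_def by (metis comp_apply word_perm_append)
  have wJ: "\<And>q. word_perm JA q = sh \<sigma> (word_perm [1..<Suc n] (\<tau> q))"
    unfolding JA_def \<sigma>_def \<tau>_def by (simp add: word_perm_append word_perm_map_Suc del: upt_Suc)
  have s0: "\<sigma> 0 = 0" unfolding \<sigma>_def using word_perm_fix[OF si_take] by simp
  have "word_perm JA q = longest (Suc n) q" for q
  proof -
    consider "q = 0" | "1 \<le> q" "q \<le> n" | "q = Suc n" | "Suc n < q" by linarith
    then show ?thesis
    proof cases
      case 1
      have "\<tau> 0 = 0" unfolding \<tau>_def using word_perm_fix[OF si_drop'] by simp
      moreover have "word_perm [1..<Suc n] 0 = 0" using word_perm_asc[of n 0] by (simp del: upt_Suc)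
      ultimately show ?thesis using wJ 1 by (simp add: longest_def)
    next
      case 2
      have r: "1 \<le> \<tau> q \<and> \<tau> q \<le> n" unfolding \<tau>_def using word_perm_range[OF si_drop' 2] .
      have "word_perm JA q = Suc (\<sigma> (\<tau> q))" using wJ uA r by simp
      also have "\<dots> = Suc (Suc n - q)" using st 2 by (simp add: longest_def)
      finally show ?thesis using 2 by (simp add: longest_def)
    next
      case 3
      have "\<tau> q = q" unfolding \<tau>_def using word_perm_fix[OF si_drop'] 3 by simp
      moreover have "word_perm [1..<Suc n] (Suc n) = 1" using word_perm_asc[of n "Suc n"] by (simp del: upt_Suc)
      ultimately show ?thesis using wJ 3 s0 by (simp add: longest_def sh_def)
    next
      case 4
      have "\<tau> q = q" unfolding \<tau>_def using word_perm_fix[OF si_drop'] 4 by simp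
      moreover have "word_perm [1..<Suc n] q = q" using word_perm_asc[of n q] 4 by (simp del: upt_Suc)
      moreover have "\<sigma> (q - 1) = q - 1" unfolding \<sigma>_def using word_perm_fix[OF si_take] 4 by simp
      ultimately show ?thesis using wJ 4 by (simp add: longest_def sh_def)
    qed
  qed
  then have "word_perm JA = longest (Suc n)" by auto
  moreover have "length JA = Suc n * (Suc n - 1) div 2" using lenA Mdef Mn_arith by simp
  ultimately show ?thesis using setJA by (simp add: Sigma_def)
qed

end

theorem mainTheorem10:
  fixes n s :: nat and i :: "nat list" and b :: ext_kind
  assumes "n \<ge> 2" and "i \<in> Sigma n" and "s \<le> n * (n - 1) div 2"
  shows "ext b n s i \<in> Sigma (Suc n)
    \<and> (\<exists>\<Psi> :: path \<Rightarrow> path.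
         inj_on \<Psi> (GP n i)
       \<and> \<Psi> ` GP n i = {P \<in> GP (Suc n) (ext b n s i).
                          no_switch_on_wire (ext b n s i) (ext_wire b n) P}
       \<and> (\<forall>P \<in> GP n i. restrict_path b n s (ext b n s i) (\<Psi> P) = P))
    \<and> card (GP (Suc n) (ext b n s i)) = card (GP n i)
        + card {P \<in> GP (Suc n) (ext b n s i).
                  \<not> no_switch_on_wire (ext b n s i) (ext_wire b n) P}"
proof -
  define M where "M = n * (n - 1) div 2"
  define p where "p = M - s"
  have li: "length i = M" and si: "set i \<subseteq> {1..<n}" and wi: "word_perm i = longest n"
    using assms(2) by (auto simp: Sigma_def M_def)
  interpret base n M p i by unfold_locales (use li si in \<open>auto simp: p_def\<close>)
  show ?thesis
  proof (cases b)
    case ExtD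
    have e: "ext b n s i = JD" unfolding JD_def by (simp add: ExtD ext_def Let_def p_def M_def del: upt_Suc)
    have w: "ext_wire b n = Suc n" unfolding ExtD ext_wire_def by simp
    interpret S: sim i JD embf nodef 0 n "Suc n" by (rule simD)
    have kS: "0 \<le> k' \<and> 1 \<le> k' - 0 \<and> k' - 0 < n"
      if g: "(k', ps) \<in> GP (Suc n) JD" and ns: "no_switch_on_wire JD (Suc n) (k', ps)" for k' ps
    proof -
      have k: "1 \<le> k'" "k' < Suc n" and wk: "walk JD k' k' None ps" using g by (auto simp: GP_def rigorous_walk)
      have nsw: "nsw JD (Suc n) k' ps" using ns no_switch_nsw[of ps JD "Suc n" k'] walk_set[OF wk] by blast
      have "k' \<noteq> n"
      proof
        assume "k' = n"
        then show False using G1[OF wk nsw] by simp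
      qed
      then show ?thesis using k by simp
    qed
    have A: "(\<exists>\<Psi> :: path \<Rightarrow> path. inj_on \<Psi> (GP n i)
       \<and> \<Psi> ` GP n i = {P \<in> GP (Suc n) JD. no_switch_on_wire JD (Suc n) P}
       \<and> (\<forall>P \<in> GP n i. S.RR (\<Psi> P) = P))
    \<and> card (GP (Suc n) JD) = card (GP n i) + card {P \<in> GP (Suc n) JD. \<not> no_switch_on_wire JD (Suc n) P}"
      by (rule S.assemble) (use kS in auto)
    have R: "restrict_path b n s JD P = S.RR P" for P
      unfolding S.RR_def S.rl_def nodef_def
      by (simp add: restrict_path_def Let_def ExtD ext_wire_def p_def M_def case_prod_beta)
    show ?thesis unfolding e w R using A D_sigma[OF wi M_def] by blast
  next
    case ExtA
    have e: "ext b n s i = JA" unfolding JA_def by (simp add: ExtA ext_def Let_def p_def M_def del: upt_Suc)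
    have w: "ext_wire b n = 1" unfolding ExtA ext_wire_def by simp
    interpret S: sim i JA embf nodef 1 n 1 by (rule simA)
    have kS: "1 \<le> k' \<and> 1 \<le> k' - 1 \<and> k' - 1 < n"
      if g: "(k', ps) \<in> GP (Suc n) JA" and ns: "no_switch_on_wire JA 1 (k', ps)" for k' ps
    proof -
      have k: "1 \<le> k'" "k' < Suc n" and wk: "walk JA k' k' None ps" using g by (auto simp: GP_def rigorous_walk)
      have nsw: "nsw JA 1 k' ps" using ns no_switch_nsw[of ps JA 1 k'] walk_set[OF wk] by blast
      have "k' \<noteq> 1"
      proof
        assume "k' = 1"
        then show False using G2[of JA k' 1 None ps] wk nsw by simp
      qed
      then show ?thesis using k by arith
    qed
    have A: "(\<exists>\<Psi> :: path \<Rightarrow> path. inj_on \<Psi> (GP n i)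
       \<and> \<Psi> ` GP n i = {P \<in> GP (Suc n) JA. no_switch_on_wire JA 1 P}
       \<and> (\<forall>P \<in> GP n i. S.RR (\<Psi> P) = P))
    \<and> card (GP (Suc n) JA) = card (GP n i) + card {P \<in> GP (Suc n) JA. \<not> no_switch_on_wire JA 1 P}"
      by (rule S.assemble) (use kS in auto)
    have R: "restrict_path b n s JA P = S.RR P" for P
      unfolding S.RR_def S.rl_def nodef_def
      by (simp add: restrict_path_def Let_def ExtA ext_wire_def p_def M_def case_prod_beta)
    show ?thesis unfolding e w R using A A_sigma[OF wi M_def] by blast
  qed
qed


end
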